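(* In the game $\mathrm{CN}(7,4)$, if $\mathbf p\notin S$ and exactly one stack of $\mathbf p$ has height $0$, then there is a legal move from $\mathbf p$ to some $\mathbf p'\in S$. Here, writing a position as $(a,b,c,d,e,f,g)$ with $a$ a minimum entry, $S_1=\{a=b=0,\ c=g>0,\ d+e+f=c\}$, $S_2=\{a=b=c=d=e=f=g\}$, $S_3=\{a=b,\ c=g,\ d=f,\ a+c=d+e,\ 0<a<e\}$, $S_4=\{a=f,\ b+c=d+e=g+a,\ a<\min\{b,e\},\ a<\max\{c,d\}\}$, and $S=S_1\cup S_2\cup S_3\cup S_4$.
   Context: Circular Nim $\mathrm{CN}(7,4)$: $7$ stacks of tokens are arranged in a circle; a position is a vector $(p_1,\dots,p_7)$ of nonnegative integers giving the stack heights in order around the circle, determined only up to rotation and reflection. A legal move consists of choosing $4$ cyclically consecutive stacks and removing at least one token from at least one of these $4$ stacks (any number from each chosen stack; other stacks unchanged). A position belongs to $S_i$ if some rotation and/or reflection $(a,b,c,d,e,f,g)$ of it with $a$ equal to the minimum entry satisfies the conditions defining $S_i$. *)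

theory Defs
  imports Main
begin

text \<open>Positions of CN(7,4) are lists of length 7 of stack heights, read cyclically.\<close>

definition syms :: "nat list \<Rightarrow> nat list set" where
  "syms p = {rotate k p | k. k < 7} \<union> {rotate k (rev p) | k. k < 7}"

fun condS1 :: "nat list \<Rightarrow> bool" where
  "condS1 [a,b,c,d,e,f,g] = (a = 0 \<and> b = 0 \<and> c = g \<and> c > 0 \<and> d + e + f = c)"
| "condS1 _ = False"

fun condS2 :: "nat list \<Rightarrow> bool" where
  "condS2 [a,b,c,d,e,f,g] = (a = b \<and> b = c \<and> c = d \<and> d = e \<and> e = f \<and> f = g)"
| "condS2 _ = False"

fun condS3 :: "nat list \<Rightarrow> bool" where
  "condS3 [a,b,c,d,e,f,g] = (a = b \<and> c = g \<and> d = f \<and> a + c = d + e \<and> 0 < a \<and> a < e)"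
| "condS3 _ = False"

fun condS4 :: "nat list \<Rightarrow> bool" where
  "condS4 [a,b,c,d,e,f,g] = (a = f \<and> b + c = d + e \<and> d + e = g + a
      \<and> a < min b e \<and> a < max c d)"
| "condS4 _ = False"

definition inSi :: "(nat list \<Rightarrow> bool) \<Rightarrow> nat list \<Rightarrow> bool" where
  "inSi C p = (\<exists>q \<in> syms p. q ! 0 = Min (set q) \<and> C q)"

definition inS :: "nat list \<Rightarrow> bool" where
  "inS p = (inSi condS1 p \<or> inSi condS2 p \<or> inSi condS3 p \<or> inSi condS4 p)"

definition window :: "nat \<Rightarrow> nat set" where
  "window i = {(i + t) mod 7 | t. t < 4}"

definition legal_move :: "nat list \<Rightarrow> nat list \<Rightarrow> bool" where
  "legal_move p p' = (length p = 7 \<and> length p' = 7 \<and>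
     (\<exists>i < 7. (\<forall>j < 7. j \<notin> window i \<longrightarrow> p' ! j = p ! j)
             \<and> (\<forall>j < 7. p' ! j \<le> p ! j) \<and> p' \<noteq> p))"

end

theory Submission
  imports Defs
begin
lemma lt7: "(j::nat) < 7 \<longleftrightarrow> j = 0 \<or> j = 1 \<or> j = 2 \<or> j = 3 \<or> j = 4 \<or> j = 5 \<or> j = 6"
  by arith
lemma all7: "(\<forall>j<7. P j) = (P 0 \<and> P 1 \<and> P 2 \<and> P 3 \<and> P 4 \<and> P 5 \<and> (P (6::nat)::bool))"
  unfolding lt7 by blast
lemma ex7: "(\<exists>j<7. P j) = (P 0 \<or> P 1 \<or> P 2 \<or> P 3 \<or> P 4 \<or> P 5 \<or> (P (6::nat)::bool))"
  unfolding lt7 by blast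
lemma window_eq: "window i = {i mod 7, (i+1) mod 7, (i+2) mod 7, (i+3) mod 7}"
proof -
  have a: "{t::nat. t < 4} = {0,1,2,3}" by (simp only: set_eq_iff mem_Collect_eq insert_iff empty_iff) arith
  have "window i = (\<lambda>t. (i+t) mod 7) ` {t. t < 4}" unfolding window_def by blast
  also have "\<dots> = {i mod 7, (i+1) mod 7, (i+2) mod 7, (i+3) mod 7}" unfolding a by simp
  finally show ?thesis .
qed
lemma rot2: "rotate 2 [a,b,c,d,e,f,g] = [c,d,e,f,g,a,b]"
  by (simp add: numeral_eq_Suc)
lemma rot3: "rotate 3 [a,b,c,d,e,f,g] = [d,e,f,g,a,b,c]"
  by (simp add: numeral_eq_Suc)
lemma rot6: "rotate 6 [a,b,c,d,e,f,g] = [g,a,b,c,d,e,f]"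
  by (simp add: numeral_eq_Suc)
lemma "[a,b,c,d,e,f,g::nat] ! 5 = f" by simp

lemma lmI:
  assumes "length p = 7" "length q = 7" "i < 7" "\<forall>j<7. j \<notin> window i \<longrightarrow> q!j = p!j"
    "\<forall>j<7. q!j \<le> p!j" "q \<noteq> p"
  shows "legal_move p q"
  using assms unfolding legal_move_def by blast

lemma inS_S1:
  assumes "rotate k p = q" "k < 7" "q!0 = 0" "condS1 q"
  shows "inS p"
proof -
  have "q \<in> syms p" using assms unfolding syms_def by blast
  moreover have "q ! 0 = Min (set q)"
  proof -
    have "q \<noteq> []" using assms(4) by (cases q rule: condS1.cases) auto
    then have "q!0 \<in> set q" by simp
    then show ?thesis using assms(3) by (metis Min_le List.finite_set le_zero_eq)
  qed
  ultimately show ?thesis using assms unfolding inS_def inSi_def by blast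
qed

lemma inS_S4:
  assumes "rotate k p = q" "k < 7" "q!0 = 0" "condS4 q"
  shows "inS p"
proof -
  have "q \<in> syms p" using assms unfolding syms_def by blast
  moreover have "q ! 0 = Min (set q)"
  proof -
    have "q \<noteq> []" using assms(4) by (cases q rule: condS4.cases) auto
    then have "q!0 \<in> set q" by simp
    then show ?thesis using assms(3) by (metis Min_le List.finite_set le_zero_eq)
  qed
  ultimately show ?thesis using assms unfolding inS_def inSi_def by blast
qed

lemma split2:
  assumes "s \<le> d + e" "0 < d" "0 < e" "0 < (s::nat)"
  shows "\<exists>d1 e1. 0 < d1 \<and> d1 \<le> d \<and> e1 \<le> e \<and> d1 + e1 = s \<and> (2 \<le> s \<longrightarrow> 0 < e1)"
proof (cases "2 \<le> s")
  case True
  show ?thesis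
    by (rule exI[of _ "min d (s-1)"], rule exI[of _ "s - min d (s-1)"]) (use assms True in arith)
next
  case False
  then show ?thesis by (intro exI[of _ 1] exI[of _ 0]) (use assms in arith)
qed

lemma split0:
  assumes "s \<le> d + (e::nat)"
  shows "\<exists>d1 e1. d1 \<le> d \<and> e1 \<le> e \<and> d1 + e1 = s"
  by (rule exI[of _ "min d s"], rule exI[of _ "s - min d s"]) (use assms in arith)

lemma FB:
  assumes "b = 1" "g = 1" "0 < c" "0 < d" "0 < e" "0 < f"
  shows "\<exists>q. legal_move [0,b,c,d,e,f,g] q \<and> inS q"
proof (intro exI conjI)
  show "legal_move [0,b,c,d,e,f,g] [0,1,0,0,1,0,1]"
    by (rule lmI[where i=2]) (use assms in \<open>simp_all add: all7 window_eq\<close>)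
  show "inS [0,1,0,0,1,0,1]"
    by (rule inS_S1[where k=2]) (simp_all only: rot2, simp_all)
qed

lemma F1:
  fixes b c d e f g :: nat
  assumes "0<c" "0<d" "0<e" "0<g" "g \<le> b" "b \<le> d+e" "b \<le> g+f" "2 \<le> b"
  shows "\<exists>q. legal_move [0,b,c,d,e,f,g] q \<and> inS q"
proof -
  obtain d1 e1 where h: "0<d1" "d1 \<le> d" "e1 \<le> e" "d1+e1 = b" "2 \<le> b \<longrightarrow> 0<e1" using split2[of b d e] assms by auto
  show ?thesis
  proof (intro exI conjI)
    show "legal_move [0,b,c,d,e,f,g] [0,b,0,d1,e1,b-g,g]"
      by (rule lmI[where i=2]) (use assms h in \<open>simp_all add: all7 window_eq\<close>)
    show "inS [0,b,0,d1,e1,b-g,g]"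
      by (rule inS_S4[where k=2]) (simp_all only: rot2, use assms h in simp_all)
  qed
qed

lemma F2:
  fixes b c d e f g :: nat
  assumes "0<c" "0<d" "0<e" "0<f" "0<g" "f+g \<le> b" "f+g \<le> d+e"
  shows "\<exists>q. legal_move [0,b,c,d,e,f,g] q \<and> inS q"
proof -
  obtain d1 e1 where h: "0<d1" "d1 \<le> d" "e1 \<le> e" "d1+e1 = f+g" using split2[of "f+g" d e] assms by auto
  show ?thesis
  proof (intro exI conjI)
    show "legal_move [0,b,c,d,e,f,g] [0,f+g,0,d1,e1,f,g]"
      by (rule lmI[where i=1]) (use assms h in \<open>simp_all add: all7 window_eq\<close>)
    show "inS [0,f+g,0,d1,e1,f,g]"
      by (rule inS_S4[where k=2]) (simp_all only: rot2, use assms h in simp_all)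
  qed
qed

lemma F3:
  fixes b c d e f g :: nat
  assumes "0<c" "0<d" "0<e" "0<g" "f < d+e" "d+e \<le> f+g" "d+e \<le> b"
  shows "\<exists>q. legal_move [0,b,c,d,e,f,g] q \<and> inS q"
proof -
  show ?thesis
  proof (intro exI conjI)
    show "legal_move [0,b,c,d,e,f,g] [0,d+e,0,d,e,f,d+e-f]"
      by (rule lmI[where i=6]) (use assms in \<open>simp_all add: all7 window_eq\<close>)
    show "inS [0,d+e,0,d,e,f,d+e-f]"
      by (rule inS_S4[where k=2]) (simp_all only: rot2, use assms in simp_all)
  qed
qed

lemma F5:
  fixes b c d e f g :: nat
  assumes "0<g" "0<d" "d+e \<le> f" "f \<le> b" "f \<le> c+d+e"
  shows "\<exists>q. legal_move [0,b,c,d,e,f,g] q \<and> inS q"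
proof -
  show ?thesis
  proof (intro exI conjI)
    show "legal_move [0,b,c,d,e,f,g] [0,f,f-d-e,d,e,f,0]"
      by (rule lmI[where i=6]) (use assms in \<open>simp_all add: all7 window_eq\<close>)
    show "inS [0,f,f-d-e,d,e,f,0]"
      by (rule inS_S1[where k=6]) (simp_all only: rot6, use assms in simp_all)
  qed
qed

lemma F8:
  fixes b c d e f g :: nat
  assumes "0<g" "0<b" "c \<le> b" "b \<le> f" "b \<le> c+d+e"
  shows "\<exists>q. legal_move [0,b,c,d,e,f,g] q \<and> inS q"
proof -
  have "b-c \<le> d+e" using assms by arith
  then obtain d1 e1 where h: "d1 \<le> d" "e1 \<le> e" "d1+e1 = b-c" using split0 by blast
  show ?thesis
  proof (intro exI conjI)
    show "legal_move [0,b,c,d,e,f,g] [0,b,c,d1,e1,b,0]"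
      by (rule lmI[where i=3]) (use assms h in \<open>simp_all add: all7 window_eq\<close>)
    show "inS [0,b,c,d1,e1,b,0]"
      by (rule inS_S1[where k=6]) (simp_all only: rot6, use assms h in simp_all)
  qed
qed

lemma F6:
  fixes b c d e f g :: nat
  assumes "0<g" "0<c" "c+d+e \<le> b" "c+d+e \<le> f"
  shows "\<exists>q. legal_move [0,b,c,d,e,f,g] q \<and> inS q"
proof -
  show ?thesis
  proof (intro exI conjI)
    show "legal_move [0,b,c,d,e,f,g] [0,c+d+e,c,d,e,c+d+e,0]"
      by (rule lmI[where i=5]) (use assms in \<open>simp_all add: all7 window_eq\<close>)
    show "inS [0,c+d+e,c,d,e,c+d+e,0]"
      by (rule inS_S1[where k=6]) (simp_all only: rot6, use assms in simp_all)
  qed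
qed

lemma F10:
  fixes b c d e f g :: nat
  assumes "0<d" "b \<le> c" "c \<le> b+g" "c \<le> f" "0<c"
  shows "\<exists>q. legal_move [0,b,c,d,e,f,g] q \<and> inS q"
proof -
  show ?thesis
  proof (intro exI conjI)
    show "legal_move [0,b,c,d,e,f,g] [0,b,c,0,0,c,c-b]"
      by (rule lmI[where i=3]) (use assms in \<open>simp_all add: all7 window_eq\<close>)
    show "inS [0,b,c,0,0,c,c-b]"
      by (rule inS_S1[where k=3]) (simp_all only: rot3, use assms in simp_all)
  qed
qed

lemma F9:
  fixes b c d e f g :: nat
  assumes "0<d" "0<b" "b+g \<le> c" "b+g \<le> f"
  shows "\<exists>q. legal_move [0,b,c,d,e,f,g] q \<and> inS q"
proof -
  show ?thesis
  proof (intro exI conjI)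
    show "legal_move [0,b,c,d,e,f,g] [0,b,b+g,0,0,b+g,g]"
      by (rule lmI[where i=2]) (use assms in \<open>simp_all add: all7 window_eq\<close>)
    show "inS [0,b,b+g,0,0,b+g,g]"
      by (rule inS_S1[where k=3]) (simp_all only: rot3, use assms in simp_all)
  qed
qed

lemma F11:
  fixes b c d e f g :: nat
  assumes "0<d" "0<f" "g \<le> f" "f \<le> b+g" "f \<le> c"
  shows "\<exists>q. legal_move [0,b,c,d,e,f,g] q \<and> inS q"
proof -
  show ?thesis
  proof (intro exI conjI)
    show "legal_move [0,b,c,d,e,f,g] [0,f-g,f,0,0,f,g]"
      by (rule lmI[where i=1]) (use assms in \<open>simp_all add: all7 window_eq\<close>)
    show "inS [0,f-g,f,0,0,f,g]"
      by (rule inS_S1[where k=3]) (simp_all only: rot3, use assms in simp_all)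
  qed
qed


lemma M0:
  fixes b c d e f g :: nat
  assumes "0<b" "0<c" "0<d" "0<e" "0<f" "0<g" "g \<le> b"
  shows "\<exists>q. legal_move [0,b,c,d,e,f,g] q \<and> inS q"
proof (cases "b = 1 \<and> g = 1")
  case True
  then show ?thesis using FB assms by blast
next
  case nb: False
  show ?thesis
  proof (cases "b \<le> d+e")
    case c1: True
    show ?thesis
    proof (cases "b \<le> g+f")
      case True
      show ?thesis by (rule F1) (use assms nb c1 True in arith)+
    next
      case False
      show ?thesis by (rule F2) (use assms nb c1 False in arith)+
    qed
  next
    case c1: False
    show ?thesis
    proof (cases "f+g \<le> d+e")
      case True
      show ?thesis by (rule F2) (use assms c1 True in arith)+
    next
      case c2: False
      show ?thesis
      proof (cases "f < d+e")
        case True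
        show ?thesis by (rule F3) (use assms c1 c2 True in arith)+
      next
        case c3: False
        show ?thesis
        proof (cases "f \<le> b \<and> f \<le> c+d+e")
          case True
          show ?thesis by (rule F5) (use assms c1 c2 c3 True in arith)+
        next
          case c4: False
          show ?thesis
          proof (cases "c \<le> b")
            case c5: True
            show ?thesis
            proof (cases "b \<le> f \<and> b \<le> c+d+e")
              case True
              show ?thesis by (rule F8) (use assms c1 c2 c3 c5 True in arith)+
            next
              case False
              show ?thesis by (rule F6) (use assms c1 c2 c3 c4 c5 False in arith)+
            qed
          next
            case c5: False
            show ?thesis
            proof (cases "c \<le> f")
              case c6: True
              show ?thesis
              proof (cases "c \<le> b+g")
                case True
                show ?thesis by (rule F10) (use assms c5 c6 True in arith)+
              next
                case False
                show ?thesis by (rule F9) (use assms c5 c6 False in arith)+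
              qed
            next
              case c6: False
              show ?thesis
              proof (cases "f \<le> b+g")
                case True
                show ?thesis by (rule F11) (use assms c4 c5 c6 True in arith)+
              next
                case False
                show ?thesis by (rule F9) (use assms c5 c6 False in arith)+
              qed
            qed
          qed
        qed
      qed
    qed
  qed
qed

lemma len7: "length xs = 7 \<Longrightarrow> \<exists>a b c d e f g. xs = [a,b,c,d,e,f,g]"
  by (auto simp: numeral_eq_Suc length_Suc_conv)

lemma lm_rev:
  assumes "legal_move p q"
  shows "legal_move (rev p) (rev q)"
proof -
  from assms obtain i where L: "length p = 7" "length q = 7" "i < 7"
    "\<forall>j<7. j \<notin> window i \<longrightarrow> q!j = p!j" "\<forall>j<7. q!j \<le> p!j" "q \<noteq> p"
    unfolding legal_move_def by blast
  show ?thesis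
  proof (rule lmI[where i="(10 - i) mod 7"])
    show "(\<forall>j<7. j \<notin> window ((10 - i) mod 7) \<longrightarrow> rev q ! j = rev p ! j)"
    proof (intro allI impI)
      fix j assume j: "j < 7" "j \<notin> window ((10 - i) mod 7)"
      have "6 - j \<notin> window i" using j L(3) by (simp only: lt7; elim disjE; simp add: window_eq)
      then show "rev q ! j = rev p ! j" using L j by (simp add: rev_nth)
    qed
  qed (use L in \<open>auto simp: rev_nth\<close>)
qed

lemma lm_rot1:
  assumes "legal_move p q"
  shows "legal_move (rotate1 p) (rotate1 q)"
proof -
  from assms obtain i where L: "length p = 7" "length q = 7" "i < 7"
    "\<forall>j<7. j \<notin> window i \<longrightarrow> q!j = p!j" "\<forall>j<7. q!j \<le> p!j" "q \<noteq> p"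
    unfolding legal_move_def by blast
  show ?thesis
  proof (rule lmI[where i="(i + 6) mod 7"])
    show "(\<forall>j<7. j \<notin> window ((i + 6) mod 7) \<longrightarrow> rotate1 q ! j = rotate1 p ! j)"
    proof (intro allI impI)
      fix j assume j: "j < 7" "j \<notin> window ((i + 6) mod 7)"
      have "Suc j mod 7 \<notin> window i" using j L(3) by (simp only: lt7; elim disjE; simp add: window_eq)
      then show "rotate1 q ! j = rotate1 p ! j" using L j by (simp add: nth_rotate1)
    next
    qed
    show "rotate1 q \<noteq> rotate1 p" using L(6) inj_rotate1 by (metis injD)
  qed (use L in \<open>auto simp: nth_rotate1\<close>)
qed

lemma lm_rot: "legal_move p q \<Longrightarrow> legal_move (rotate k p) (rotate k q)"
  by (induction k) (auto intro: lm_rot1)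

lemma inS_mono: "syms p \<subseteq> syms p' \<Longrightarrow> inS p \<Longrightarrow> inS p'"
  unfolding inS_def inSi_def by blast

lemma syms_rev: "syms p \<subseteq> syms (rev p)"
  unfolding syms_def by auto

lemma rr: "rotate m (rotate1 p) = rotate (Suc m) p"
  by (simp add: rotate1_rotate_swap)

lemma syms_rot1:
  assumes "length p = 7"
  shows "syms p \<subseteq> syms (rotate1 p)"
proof
  fix q assume "q \<in> syms p"
  then consider k where "k < 7" "q = rotate k p" | k where "k < 7" "q = rotate k (rev p)"
    unfolding syms_def by blast
  then show "q \<in> syms (rotate1 p)"
  proof cases
    case 1
    have "rotate ((k+6) mod 7) (rotate1 p) = rotate (((k + 6) mod 7 + 1) mod 7) p"
      unfolding rr using assms by (metis rotate_conv_mod Suc_eq_plus1)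
    also have "((k + 6) mod 7 + 1) mod 7 = k mod 7" using 1(1) by (simp only: lt7; elim disjE; simp)
    also have "rotate (k mod 7) p = q" using 1 assms by (metis rotate_conv_mod)
    finally have "rotate ((k+6) mod 7) (rotate1 p) = q" .
    then show ?thesis unfolding syms_def by (intro UnI1 CollectI exI[of _ "(k+6) mod 7"] conjI) auto
  next
    case 2
    have "rotate ((k+1) mod 7) (rev (rotate1 p)) = rev (rotate (7 - (k+1) mod 7) (rotate1 p))"
      using assms by (simp add: rotate_rev)
    also have "\<dots> = rev (rotate ((7 - (k+1) mod 7 + 1) mod 7) p)"
      unfolding rr using assms by (metis rotate_conv_mod Suc_eq_plus1)
    also have "(7 - (k+1) mod 7 + 1) mod 7 = (7 - k mod 7) mod 7" using 2(1) by (simp only: lt7; elim disjE; simp)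
    also have "rev (rotate ((7 - k mod 7) mod 7) p) = q"
      using 2 assms by (metis rotate_rev rotate_conv_mod)
    finally have "rotate ((k+1) mod 7) (rev (rotate1 p)) = q" .
    then show ?thesis unfolding syms_def by (intro UnI2 CollectI exI[of _ "(k+1) mod 7"] conjI) auto
  qed
qed

lemma inS_rot: "length p = 7 \<Longrightarrow> inS p \<Longrightarrow> inS (rotate k p)"
  by (induction k) (auto intro: inS_mono[OF syms_rot1])

lemma inS_rev: "inS p \<Longrightarrow> inS (rev p)"
  by (rule inS_mono[OF syms_rev])


lemma M:
  fixes b c d e f g :: nat
  assumes "0<b" "0<c" "0<d" "0<e" "0<f" "0<g"
  shows "\<exists>q. legal_move [0,b,c,d,e,f,g] q \<and> inS q"
proof (cases "g \<le> b")
  case True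
  then show ?thesis using M0 assms by blast
next
  case False
  then obtain q where q: "legal_move [0,g,f,e,d,c,b] q" "inS q" using M0[of g f e d c b] assms by auto
  have "legal_move (rotate 6 (rev [0,g,f,e,d,c,b])) (rotate 6 (rev q))"
    by (rule lm_rot[OF lm_rev[OF q(1)]])
  moreover have "rotate 6 (rev [0,g,f,e,d,c,b]) = [0,b,c,d,e,f,g]" by (simp add: rot6)
  moreover have "length q = 7" using q(1) unfolding legal_move_def by blast
  then have "inS (rotate 6 (rev q))" by (intro inS_rot inS_rev q(2)) simp
  ultimately show ?thesis by auto
qed

lemma mod_ne: "(i::nat) < 7 \<Longrightarrow> 1 \<le> j \<Longrightarrow> j < 7 \<Longrightarrow> (i + j) mod 7 \<noteq> i"
  by (simp only: lt7; elim disjE; simp)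

theorem lemma3:
  fixes p :: "nat list"
  assumes "length p = 7"
    and "\<not> inS p"
    and "card {i. i < 7 \<and> p ! i = 0} = 1"
  shows "\<exists>p'. legal_move p p' \<and> inS p'"
proof -
  from assms(3) obtain i where Zi: "{i. i < 7 \<and> p ! i = 0} = {i}" by (rule card_1_singletonE)
  then have i: "i < 7" "p ! i = 0" by auto
  have oth: "\<And>j. j < 7 \<Longrightarrow> p ! j = 0 \<Longrightarrow> j = i" using Zi by auto
  define p0 where "p0 = rotate i p"
  have lp0: "length p0 = 7" using assms(1) by (simp add: p0_def)
  have nth0: "\<And>j. j < 7 \<Longrightarrow> p0 ! j = p ! ((i + j) mod 7)"
    using assms(1) by (simp add: p0_def nth_rotate)
  have nz: "\<And>j. 1 \<le> j \<Longrightarrow> j < 7 \<Longrightarrow> p0 ! j \<noteq> 0"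
  proof
    fix j assume j: "1 \<le> j" "j < 7" "p0 ! j = 0"
    then have "p ! ((i + j) mod 7) = 0" using nth0 by simp
    then have "(i + j) mod 7 = i" using oth by simp
    then show False using mod_ne[OF i(1) j(1) j(2)] by simp
  qed
  have z: "p0 ! 0 = 0" using nth0[of 0] i by simp
  obtain a b c d e f g where p0eq: "p0 = [a,b,c,d,e,f,g]" using len7[OF lp0] by blast
  have "a = 0" "0 < b" "0 < c" "0 < d" "0 < e" "0 < f" "0 < g"
    using z nz[of 1] nz[of 2] nz[of 3] nz[of 4] nz[of 5] nz[of 6] unfolding p0eq by auto
  then obtain q where q: "legal_move p0 q" "inS q" using M[of b c d e f g] p0eq by auto
  have "rotate (7 - i) p0 = p"
    unfolding p0_def rotate_rotate using i(1) assms(1) by simp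
  moreover have "legal_move (rotate (7 - i) p0) (rotate (7 - i) q)" by (rule lm_rot[OF q(1)])
  moreover have "length q = 7" using q(1) unfolding legal_move_def by blast
  then have "inS (rotate (7 - i) q)" by (intro inS_rot q(2))
  ultimately show ?thesis by auto
qed

end
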